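(* Let $(p_m)$ and $(q_n)$ belong to $SVA_{reg(\alpha)}$ (for some $\alpha\ge0$), and let $(u_{mn})$ be a double sequence of real numbers that is $(\overline{N},p,q)$ summable to a number $\ell$. If $$\frac{P_m}{p_m}\Delta_{10}u_{mn}=O_L(1)\quad\text{and}\quad\frac{Q_n}{q_n}\Delta_{01}u_{mn}=O_L(1),$$ then $(u_{mn})$ is $P$-convergent to $\ell$.
   Context: Weights: $(p_m)_{m\ge0},(q_n)_{n\ge0}$ are sequences of positive reals with $P_m=\sum_{i=0}^m p_i\to\infty$ and $Q_n=\sum_{j=0}^n q_j\to\infty$. $SVA_{reg(\alpha)}$ denotes the set of positive sequences $(p_m)$ whose partial sums have the form $P_m=(m+1)^{\alpha}L(m)$ ($m\ge0$) with a constant $\alpha\ge0$ and a slowly varying function $L$ on $(0,\infty)$, i.e. $L$ positive, measurable, and $L(\lambda t)/L(t)\to1$ as $t\to\infty$ for every $\lambda>0$. The weighted means are $\sigma_{mn}=\frac{1}{P_mQ_n}\sum_{i=0}^m\sum_{j=0}^n p_iq_ju_{ij}$; $(u_{mn})$ is $(\overline{N},p,q)$ summable to $\ell$ if $(\sigma_{mn})$ is $P$-convergent to $\ell$. A double sequence $(a_{mn})$ is $P$-convergent to $\ell$ if for every $\epsilon>0$ there is $n_0$ with $|a_{mn}-\ell|<\epsilon$ whenever $m,n\ge n_0$. $\Delta_{10}u_{mn}=u_{mn}-u_{m-1,n}$ and $\Delta_{01}u_{mn}=u_{mn}-u_{m,n-1}$. For a real double array, $a_{mn}=O_L(1)$ means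 there exist constants $M>0$ and $n_0$ such that $a_{mn}\ge -M$ for all $m,n\ge n_0$. *)

theory Defs
  imports "HOL-Analysis.Analysis"
begin

definition psum :: "(nat \<Rightarrow> real) \<Rightarrow> nat \<Rightarrow> real" where
  "psum p m = (\<Sum>i\<le>m. p i)"

definition slowly_varying :: "(real \<Rightarrow> real) \<Rightarrow> bool" where
  "slowly_varying L \<longleftrightarrow>
     (\<forall>t>0. L t > 0) \<and>
     L \<in> borel_measurable (restrict_space borel {0<..}) \<and>
     (\<forall>c>0. ((\<lambda>t. L (c * t) / L t) \<longlongrightarrow> 1) at_top)"

definition SVA_reg :: "real \<Rightarrow> (nat \<Rightarrow> real) set" where
  "SVA_reg \<alpha> = {p. (\<forall>m. p m > 0) \<and>
     (\<exists>L. slowly_varying L \<and> (\<forall>m. psum p m = (real m + 1) powr \<alpha> * L (real m)))}"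

definition wmean :: "(nat \<Rightarrow> real) \<Rightarrow> (nat \<Rightarrow> real) \<Rightarrow> (nat \<Rightarrow> nat \<Rightarrow> real) \<Rightarrow> nat \<Rightarrow> nat \<Rightarrow> real" where
  "wmean p q u m n = (1 / (psum p m * psum q n)) * (\<Sum>i\<le>m. \<Sum>j\<le>n. p i * q j * u i j)"

definition P_convergent_to :: "(nat \<Rightarrow> nat \<Rightarrow> real) \<Rightarrow> real \<Rightarrow> bool" where
  "P_convergent_to a l \<longleftrightarrow> (\<forall>\<epsilon>>0. \<exists>n0. \<forall>m n. m \<ge> n0 \<and> n \<ge> n0 \<longrightarrow> \<bar>a m n - l\<bar> < \<epsilon>)"

definition NPQ_summable_to :: "(nat \<Rightarrow> real) \<Rightarrow> (nat \<Rightarrow> real) \<Rightarrow> (nat \<Rightarrow> nat \<Rightarrow> real) \<Rightarrow> real \<Rightarrow> bool" where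
  "NPQ_summable_to p q u l \<longleftrightarrow> P_convergent_to (wmean p q u) l"

definition O_L :: "(nat \<Rightarrow> nat \<Rightarrow> real) \<Rightarrow> bool" where
  "O_L a \<longleftrightarrow> (\<exists>M>0. \<exists>n0. \<forall>m n. m \<ge> n0 \<and> n \<ge> n0 \<longrightarrow> a m n \<ge> - M)"

text \<open>Backward differences; the value at index 0 uses u_{-1,n} = 0 (irrelevant for O_L).\<close>
definition Delta10 :: "(nat \<Rightarrow> nat \<Rightarrow> real) \<Rightarrow> nat \<Rightarrow> nat \<Rightarrow> real" where
  "Delta10 u m n = u m n - (if m = 0 then 0 else u (m - 1) n)"

definition Delta01 :: "(nat \<Rightarrow> nat \<Rightarrow> real) \<Rightarrow> nat \<Rightarrow> nat \<Rightarrow> real" where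
  "Delta01 u m n = u m n - (if n = 0 then 0 else u m (n - 1))"

end

theory Submission
  imports Defs
begin



lemma psum_Suc: "psum w (Suc k) = psum w k + w (Suc k)"
  unfolding psum_def by simp

lemma psum_pos: assumes "\<And>k. w k > 0" shows "psum w m > 0"
  unfolding psum_def using assms by (intro sum_pos) auto

lemma psum_mono: assumes "\<And>k. w k > 0" and "i \<le> j" shows "psum w i \<le> psum w j"
  unfolding psum_def using assms by (intro sum_mono2) (auto simp: less_imp_le)

lemma sum_gt: fixes f :: "nat \<Rightarrow> real" assumes "a \<le> b"
  shows "(\<Sum>i\<in>{a<..b}. f i) = (\<Sum>i\<le>b. f i) - (\<Sum>i\<le>a. f i)"
proof -
  have "{..b} = {..a} \<union> {a<..b}" using assms by auto
  then have "(\<Sum>i\<le>b. f i) = (\<Sum>i\<le>a. f i) + (\<Sum>i\<in>{a<..b}. f i)"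
    by (metis sum.union_disjoint finite_atMost finite_greaterThanAtMost
        disjoint_iff greaterThanAtMost_iff atMost_iff not_le)
  then show ?thesis by simp
qed

lemma tele:
  fixes f w :: "nat \<Rightarrow> real"
  assumes w: "\<And>k. w k > 0" and C: "C \<ge> 0"
    and step: "\<And>k. a < k \<Longrightarrow> k \<le> i \<Longrightarrow> f k - f (k-1) \<ge> - C * w k / psum w k"
    and ai: "a \<le> i"
  shows "f i \<ge> f a - C * (psum w i - psum w a) / psum w a"
  using ai step
proof (induction i rule: dec_induct)
  case base then show ?case by simp
next
  case (step i)
  have Pa: "psum w a > 0" using psum_pos[where w=w, OF w] by blast
  have le: "psum w a \<le> psum w (Suc i)" using psum_mono[where w=w, OF w] step.hyps by simp
  have "f (Suc i) - f i \<ge> - C * w (Suc i) / psum w (Suc i)"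
    using step.prems[of "Suc i"] step.hyps by simp
  moreover have "C * w (Suc i) / psum w (Suc i) \<le> C * w (Suc i) / psum w a"
    using Pa le C w[of "Suc i"] by (intro divide_left_mono) auto
  moreover have "f i \<ge> f a - C * (psum w i - psum w a) / psum w a"
    using step by auto
  moreover have "C * (psum w (Suc i) - psum w a) / psum w a
     = C * (psum w i - psum w a) / psum w a + C * w (Suc i) / psum w a"
    by (simp add: psum_Suc add_divide_distrib[symmetric] algebra_simps)
  ultimately show ?case by linarith
qed

lemma tele2:
  fixes f w :: "nat \<Rightarrow> real"
  assumes w: "\<And>k. w k > 0" and C: "C \<ge> 0"
    and step: "\<And>k. a < k \<Longrightarrow> k \<le> i \<Longrightarrow> f k - f (k-1) \<ge> - C * w k / psum w k"
    and ai: "a \<le> i" and r: "psum w i \<le> (1+\<delta>) * psum w a"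
  shows "f i \<ge> f a - C * \<delta>"
proof -
  have Pa: "psum w a > 0" using psum_pos[where w=w, OF w] by blast
  have "(psum w i - psum w a) / psum w a \<le> \<delta>"
    using r Pa by (simp add: divide_le_eq algebra_simps)
  then have "C * ((psum w i - psum w a) / psum w a) \<le> C * \<delta>"
    using C by (rule mult_left_mono)
  then show ?thesis using tele[OF w C step ai] by simp
qed



lemma ratio:
  assumes pS: "p \<in> SVA_reg \<alpha>" and a0: "\<alpha> \<ge> 0" and r: "r > 1"
  shows "\<exists>K. \<forall>k\<ge>K. psum p (Suc k) \<le> r * psum p k"
proof -
  from pS obtain L where ppos: "\<And>m. p m > 0" and sv: "slowly_varying L"
    and PL: "\<And>m. psum p m = (real m + 1) powr \<alpha> * L (real m)"
    unfolding SVA_reg_def by blast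
  have Lpos: "\<And>t. t > 0 \<Longrightarrow> L t > 0" and Llim: "\<And>c. c > 0 \<Longrightarrow> ((\<lambda>t. L (c*t) / L t) \<longlongrightarrow> 1) at_top"
    using sv unfolding slowly_varying_def by auto
  define t where "t = sqrt r"
  have t1: "t > 1" using r unfolding t_def by simp
  have tt: "t * t = r" using r unfolding t_def by simp
  have "((\<lambda>b::nat. (1 + 1 / real b) powr \<alpha>) \<longlongrightarrow> (1 + 0) powr \<alpha>) sequentially"
    by (intro tendsto_powr tendsto_add tendsto_const lim_1_over_n) auto
  then have "eventually (\<lambda>b::nat. (1 + 1 / real b) powr \<alpha> < t) sequentially"
    using t1 by (intro order_tendstoD) auto
  then obtain b :: nat where b1: "b \<ge> 1" and bt: "(1 + 1 / real b) powr \<alpha> < t"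
    by (metis (no_types, lifting) eventually_sequentially le_add2 le_add_same_cancel2 max.cobounded1
        max.cobounded2 )
  have lim1: "((\<lambda>k::nat. L (real (b+1) * real k) / L (real k)) \<longlongrightarrow> 1) sequentially"
    using Llim[of "real (b+1)"] filterlim_real_sequentially by (auto intro: filterlim_compose)
  have lim2: "((\<lambda>k::nat. L (real b * real k) / L (real k)) \<longlongrightarrow> 1) sequentially"
    using Llim[of "real b"] b1 filterlim_real_sequentially by (auto intro: filterlim_compose)
  have "((\<lambda>k::nat. (L (real (b+1) * real k) / L (real k)) / (L (real b * real k) / L (real k))) \<longlongrightarrow> 1 / 1) sequentially"
    by (intro tendsto_divide lim1 lim2) auto
  then have "eventually (\<lambda>k::nat. (L (real (b+1) * real k) / L (real k)) / (L (real b * real k) / L (real k)) < t) sequentially"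
    using t1 by (intro order_tendstoD) auto
  then obtain K1 where K1: "\<And>k. k \<ge> K1 \<Longrightarrow> (L (real (b+1) * real k) / L (real k)) / (L (real b * real k) / L (real k)) < t"
    by (auto simp: eventually_sequentially)
  show ?thesis
  proof (intro exI allI impI)
    fix m assume m: "m \<ge> b * max (max b K1) 1"
    define k where "k = m div b"
    have kge: "k \<ge> max (max b K1) 1" unfolding k_def using m b1
      by (metis div_le_mono div_mult_self1_is_m mult.commute not_one_le_zero zero_less_iff_neq_zero)
    have bk: "b * k \<le> m" unfolding k_def by (simp add: mult.commute)
    have "m < b * k + b" unfolding k_def using b1
      by (metis add.commute div_mult_mod_eq le_add_diff_inverse less_one mod_less_divisor mult.commute nat_add_left_cancel_less not_less zero_less_iff_neq_zero)
    then have m1: "Suc m \<le> (b+1) * k" using kge by (simp add: algebra_simps)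
    have kpos: "real k > 0" using kge by simp
    have Lk: "L (real k) > 0" using Lpos kpos by simp
    have Lbk: "L (real b * real k) > 0" using Lpos kpos b1 by simp
    have Lb1k: "L (real (b+1) * real k) > 0" using Lpos kpos by simp
    have ratL: "L (real (b+1) * real k) < t * L (real b * real k)"
      using K1[of k] kge Lk Lbk by (simp add: field_simps)
    have q: "(real ((b+1)*k) + 1) / (real (b*k) + 1) \<le> 1 + 1 / real b"
    proof -
      have bp: "real b > 0" using b1 by simp
      have bkp: "0 \<le> real b * real k" "0 \<le> real k" by simp_all
      have "(real ((b+1)*k) + 1) * real b \<le> (real b + 1) * (real (b*k) + 1)"
        by (simp add: algebra_simps)
      then have h1: "(real ((b+1)*k) + 1) \<le> (real b + 1) * (real (b*k) + 1) / real b"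
        using bp by (simp add: pos_le_divide_eq)
      have ypos: "real (b*k) + 1 > 0" by (simp add: add_nonneg_pos)
      have "(real b + 1) * (real (b*k) + 1) / real b = (real b + 1) / real b * (real (b*k) + 1)"
        by simp
      with h1 have "(real ((b+1)*k) + 1) \<le> (real b + 1) / real b * (real (b*k) + 1)" by simp
      then have "(real ((b+1)*k) + 1) / (real (b*k) + 1) \<le> (real b + 1) / real b"
        using ypos by (simp add: pos_divide_le_eq)
      also have "\<dots> = 1 + 1 / real b" using bp by (simp add: field_simps)
      finally show ?thesis .
    qed
    have "(real ((b+1)*k) + 1) powr \<alpha> = ((real ((b+1)*k) + 1) / (real (b*k) + 1)) powr \<alpha> * (real (b*k) + 1) powr \<alpha>"
    proof -
      have xp: "real ((b+1)*k) + 1 > 0" by (simp add: add_nonneg_pos)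
      have yp: "real (b*k) + 1 > 0" by (simp add: add_nonneg_pos)
      have "((real ((b+1)*k) + 1) / (real (b*k) + 1)) powr \<alpha> = (real ((b+1)*k) + 1) powr \<alpha> / (real (b*k) + 1) powr \<alpha>"
        using xp yp by (meson powr_divide less_imp_le)
      moreover have "(real (b*k) + 1) powr \<alpha> > 0" using yp by simp
      ultimately show ?thesis by simp
    qed
    also have "\<dots> \<le> t * (real (b*k) + 1) powr \<alpha>"
    proof (rule mult_right_mono)
      have "((real ((b+1)*k) + 1) / (real (b*k) + 1)) powr \<alpha> \<le> (1 + 1 / real b) powr \<alpha>"
        using q a0 by (intro powr_mono2) auto
      then show "((real ((b+1)*k) + 1) / (real (b*k) + 1)) powr \<alpha> \<le> t" using bt by linarith
    qed simp
    finally have pw: "(real ((b+1)*k) + 1) powr \<alpha> \<le> t * (real (b*k) + 1) powr \<alpha>" .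
    have "psum p (Suc m) \<le> psum p ((b+1)*k)" using psum_mono[where w=p, OF ppos m1] .
    also have "\<dots> = (real ((b+1)*k) + 1) powr \<alpha> * L (real (b+1) * real k)" unfolding PL by (simp only: of_nat_mult)
    also have "\<dots> \<le> (t * (real (b*k) + 1) powr \<alpha>) * (t * L (real b * real k))"
      using pw ratL Lb1k t1 by (intro mult_mono) auto
    also have "\<dots> = r * ((real (b*k) + 1) powr \<alpha> * L (real b * real k))"
      using tt by (simp add: algebra_simps)
    also have "\<dots> = r * psum p (b*k)" unfolding PL by (simp only: of_nat_mult)
    also have "\<dots> \<le> r * psum p m" using psum_mono[where w=p, OF ppos bk] r by simp
    finally show "psum p (Suc m) \<le> r * psum p m" .
  qed
qed



lemma selA:
  fixes w :: "nat \<Rightarrow> real"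
  assumes w: "\<And>k. w k > 0" and inf: "filterlim (psum w) at_top sequentially"
    and rat: "\<And>r. r > 1 \<Longrightarrow> \<exists>K. \<forall>k\<ge>K. psum w (Suc k) \<le> r * psum w k"
    and d: "0 < \<delta>"
  shows "\<exists>K. \<forall>m\<ge>K. \<exists>b>m. (1+\<delta>/2) * psum w m \<le> psum w b \<and> psum w b \<le> (1+\<delta>) * psum w m"
proof -
  define r where "r = (1+\<delta>)/(1+\<delta>/2)"
  have r1: "r > 1" using d unfolding r_def by (simp add: field_simps)
  obtain K where K: "\<And>k. k \<ge> K \<Longrightarrow> psum w (Suc k) \<le> r * psum w k" using rat[OF r1] by blast
  show ?thesis
  proof (rule exI, intro allI impI)
    fix m assume mK: "m \<ge> K"
    have Pm: "psum w m > 0" using psum_pos[where w=w, OF w] by blast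
    have "eventually (\<lambda>k. psum w k \<ge> (1+\<delta>/2) * psum w m) sequentially"
      using inf by (simp add: filterlim_at_top)
    then obtain k0 where k0: "(1+\<delta>/2) * psum w m \<le> psum w k0"
      by (auto simp: eventually_sequentially)
    define b where "b = (LEAST k. (1+\<delta>/2) * psum w m \<le> psum w k)"
    have bP: "(1+\<delta>/2) * psum w m \<le> psum w b" unfolding b_def by (rule LeastI[of _ k0]) (rule k0)
    have bm: "b > m"
    proof (rule ccontr)
      assume "\<not> b > m"
      then have "psum w b \<le> psum w m" using psum_mono[where w=w, OF w] by simp
      moreover have "(1+\<delta>/2) * psum w m = psum w m + \<delta>/2 * psum w m" by (simp add: algebra_simps)
      moreover have "\<delta>/2 * psum w m > 0" using Pm d by simp
      ultimately show False using bP by linarith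
    qed
    then obtain b' where bb: "b = Suc b'" by (cases b) auto
    with bm have b'm: "b' \<ge> m" by simp
    have "\<not> (1+\<delta>/2) * psum w m \<le> psum w b'"
      using not_less_Least[of b' "\<lambda>k. (1+\<delta>/2) * psum w m \<le> psum w k"] bb unfolding b_def by simp
    then have "psum w b' < (1+\<delta>/2) * psum w m" by simp
    moreover have "psum w b \<le> r * psum w b'" using K[of b'] mK b'm bb by simp
    moreover have "r * psum w b' < r * ((1+\<delta>/2) * psum w m)"
      using calculation(1) r1 by (intro mult_strict_left_mono) auto
    ultimately have "psum w b < r * ((1+\<delta>/2) * psum w m)" by linarith
    also have "\<dots> = (1+\<delta>) * psum w m" unfolding r_def using d by (simp add: field_simps)
    finally show "\<exists>b>m. (1+\<delta>/2) * psum w m \<le> psum w b \<and> psum w b \<le> (1+\<delta>) * psum w m"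
      using bm bP by auto
  qed
qed

lemma selB:
  fixes w :: "nat \<Rightarrow> real"
  assumes w: "\<And>k. w k > 0" and inf: "filterlim (psum w) at_top sequentially"
    and rat: "\<And>r. r > 1 \<Longrightarrow> \<exists>K. \<forall>k\<ge>K. psum w (Suc k) \<le> r * psum w k"
    and d: "0 < \<delta>"
  shows "\<exists>K. \<forall>m\<ge>K. \<exists>a. N \<le> a \<and> a < m \<and> (1+\<delta>/2) * psum w a \<le> psum w m \<and> psum w m \<le> (1+\<delta>) * psum w a"
proof -
  define r where "r = (1+\<delta>)/(1+\<delta>/2)"
  have r1: "r > 1" using d unfolding r_def by (simp add: field_simps)
  obtain K0 where K0: "\<And>k. k \<ge> K0 \<Longrightarrow> psum w (Suc k) \<le> r * psum w k" using rat[OF r1] by blast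
  define N' where "N' = max N K0"
  have "eventually (\<lambda>m. psum w m \<ge> (1+\<delta>/2) * psum w N') sequentially"
    using inf by (simp add: filterlim_at_top)
  then obtain K where K: "\<And>m. m \<ge> K \<Longrightarrow> (1+\<delta>/2) * psum w N' \<le> psum w m"
    by (auto simp: eventually_sequentially)
  show ?thesis
  proof (rule exI, intro allI impI)
    fix m assume mK: "m \<ge> K"
    have Pm: "psum w m > 0" using psum_pos[where w=w, OF w] by blast
    define c where "c = (LEAST k. psum w m < (1+\<delta>/2) * psum w k)"
    have ex: "psum w m < (1+\<delta>/2) * psum w m" using Pm d by simp
    have cP: "psum w m < (1+\<delta>/2) * psum w c" unfolding c_def by (rule LeastI[of _ m]) (rule ex)
    have cm: "c \<le> m" unfolding c_def by (rule Least_le) (rule ex)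
    have cN: "c > N'"
    proof (rule ccontr)
      assume "\<not> c > N'"
      then have "psum w c \<le> psum w N'" using psum_mono[where w=w, OF w] by simp
      then have "(1+\<delta>/2) * psum w c \<le> (1+\<delta>/2) * psum w N'" using d by simp
      then show False using cP K[OF mK] by simp
    qed
    then obtain a where ca: "c = Suc a" by (cases c) auto
    with cN have aN: "a \<ge> N'" by simp
    have "\<not> psum w m < (1+\<delta>/2) * psum w a"
      using not_less_Least[of a "\<lambda>k. psum w m < (1+\<delta>/2) * psum w k"] ca unfolding c_def by simp
    then have aP: "(1+\<delta>/2) * psum w a \<le> psum w m" by simp
    have "psum w c \<le> r * psum w a" using K0[of a] aN ca unfolding N'_def by simp
    then have "(1+\<delta>/2) * psum w c \<le> (1+\<delta>/2) * (r * psum w a)" using d by simp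
    also have "\<dots> = (1+\<delta>) * psum w a" unfolding r_def using d by (simp add: field_simps)
    finally have "psum w m \<le> (1+\<delta>) * psum w a" using cP by simp
    moreover have "N \<le> a" using aN unfolding N'_def by simp
    moreover have "a < m" using ca cm by simp
    ultimately show "\<exists>a. N \<le> a \<and> a < m \<and> (1+\<delta>/2) * psum w a \<le> psum w m \<and> psum w m \<le> (1+\<delta>) * psum w a"
      using aP by blast
  qed
qed



lemma window_id:
  fixes p q :: "nat \<Rightarrow> real" and u :: "nat \<Rightarrow> nat \<Rightarrow> real"
  assumes "a \<le> b" "c \<le> d"
  defines "W \<equiv> \<lambda>m n. \<Sum>i\<le>m. \<Sum>j\<le>n. p i * q j * u i j"
  shows "(\<Sum>i\<in>{a<..b}. \<Sum>j\<in>{c<..d}. p i * q j * u i j) = W b d - W a d - W b c + W a c"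
proof -
  have "(\<Sum>i\<in>{a<..b}. \<Sum>j\<in>{c<..d}. p i * q j * u i j)
      = (\<Sum>i\<in>{a<..b}. (\<Sum>j\<le>d. p i * q j * u i j) - (\<Sum>j\<le>c. p i * q j * u i j))"
    using assms(2) by (intro sum.cong refl sum_gt)
  also have "\<dots> = (\<Sum>i\<in>{a<..b}. (\<Sum>j\<le>d. p i * q j * u i j)) - (\<Sum>i\<in>{a<..b}. (\<Sum>j\<le>c. p i * q j * u i j))"
    by (rule sum_subtractf)
  also have "\<dots> = W b d - W a d - W b c + W a c"
    unfolding W_def using assms(1) by (simp add: sum_gt)
  finally show ?thesis .
qed

lemma W_eq:
  assumes "\<And>k. p k > 0" "\<And>k. q k > 0"
  shows "(\<Sum>i\<le>m. \<Sum>j\<le>n. p i * q j * u i j) = psum p m * psum q n * wmean p q u m n"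
  using psum_pos[of p m] psum_pos[of q n] assms unfolding wmean_def by simp

lemma sumprod_gt:
  fixes p q :: "nat \<Rightarrow> real"
  assumes "a \<le> b" "c \<le> d"
  shows "(\<Sum>i\<in>{a<..b}. \<Sum>j\<in>{c<..d}. p i * q j * Y) = Y * (psum p b - psum p a) * (psum q d - psum q c)"
proof -
  have "(\<Sum>i\<in>{a<..b}. \<Sum>j\<in>{c<..d}. p i * q j * Y) = Y * (\<Sum>i\<in>{a<..b}. p i) * (\<Sum>j\<in>{c<..d}. q j)"
    by (simp add: sum_distrib_left sum_distrib_right mult_ac)
  then show ?thesis using assms by (simp add: sum_gt psum_def)
qed

lemma avg_ge:
  fixes p q :: "nat \<Rightarrow> real"
  assumes "\<And>k. p k > 0" "\<And>k. q k > 0" "a \<le> b" "c \<le> d"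
    and "\<And>i j. a < i \<Longrightarrow> i \<le> b \<Longrightarrow> c < j \<Longrightarrow> j \<le> d \<Longrightarrow> Y \<le> u i j"
  shows "Y * (psum p b - psum p a) * (psum q d - psum q c) \<le> (\<Sum>i\<in>{a<..b}. \<Sum>j\<in>{c<..d}. p i * q j * u i j)"
proof -
  have "(\<Sum>i\<in>{a<..b}. \<Sum>j\<in>{c<..d}. p i * q j * Y) \<le> (\<Sum>i\<in>{a<..b}. \<Sum>j\<in>{c<..d}. p i * q j * u i j)"
    using assms(1,2,5) by (intro sum_mono mult_left_mono) (auto intro: mult_nonneg_nonneg less_imp_le)
  then show ?thesis using sumprod_gt[OF assms(3,4)] by simp
qed

lemma avg_le:
  fixes p q :: "nat \<Rightarrow> real"
  assumes "\<And>k. p k > 0" "\<And>k. q k > 0" "a \<le> b" "c \<le> d"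
    and "\<And>i j. a < i \<Longrightarrow> i \<le> b \<Longrightarrow> c < j \<Longrightarrow> j \<le> d \<Longrightarrow> u i j \<le> Y"
  shows "(\<Sum>i\<in>{a<..b}. \<Sum>j\<in>{c<..d}. p i * q j * u i j) \<le> Y * (psum p b - psum p a) * (psum q d - psum q c)"
proof -
  have "(\<Sum>i\<in>{a<..b}. \<Sum>j\<in>{c<..d}. p i * q j * u i j) \<le> (\<Sum>i\<in>{a<..b}. \<Sum>j\<in>{c<..d}. p i * q j * Y)"
    using assms(1,2,5) by (intro sum_mono mult_left_mono) (auto intro: mult_nonneg_nonneg less_imp_le)
  then show ?thesis using sumprod_gt[OF assms(3,4)] by simp
qed

lemma four:
  fixes Pa Pb Qc Qd z1 z2 z3 z4 e :: real
  assumes "Pa > 0" "Pb > 0" "Qc > 0" "Qd > 0"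
    "\<bar>z1\<bar> \<le> e" "\<bar>z2\<bar> \<le> e" "\<bar>z3\<bar> \<le> e" "\<bar>z4\<bar> \<le> e"
  shows "\<bar>Pb*Qd*z1 - Pa*Qd*z2 - Pb*Qc*z3 + Pa*Qc*z4\<bar> \<le> e*(Pb+Pa)*(Qd+Qc)"
proof -
  have h: "\<And>x s. x > 0 \<Longrightarrow> \<bar>s\<bar> \<le> e \<Longrightarrow> \<bar>x * s\<bar> \<le> x * e"
    by (simp add: abs_mult mult_left_mono)
  have "\<bar>Pb*Qd*z1\<bar> \<le> Pb*Qd*e" using h assms by simp
  moreover have "\<bar>Pa*Qd*z2\<bar> \<le> Pa*Qd*e" using h assms by simp
  moreover have "\<bar>Pb*Qc*z3\<bar> \<le> Pb*Qc*e" using h assms by simp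
  moreover have "\<bar>Pa*Qc*z4\<bar> \<le> Pa*Qc*e" using h assms by simp
  ultimately have "\<bar>Pb*Qd*z1 - Pa*Qd*z2 - Pb*Qc*z3 + Pa*Qc*z4\<bar> \<le> Pb*Qd*e + Pa*Qd*e + Pb*Qc*e + Pa*Qc*e"
    by linarith
  also have "\<dots> = e*(Pb+Pa)*(Qd+Qc)" by (simp add: algebra_simps)
  finally show ?thesis .
qed

lemma core:
  fixes Pa Pb Qc Qd S l e \<delta> :: real
  assumes pos: "Pa > 0" "Qc > 0" and d: "0 < \<delta>" "\<delta> \<le> 1"
    and r: "(1+\<delta>/2)*Pa \<le> Pb" "Pb \<le> (1+\<delta>)*Pa" "(1+\<delta>/2)*Qc \<le> Qd" "Qd \<le> (1+\<delta>)*Qc"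
    and S: "\<bar>S - l*((Pb-Pa)*(Qd-Qc))\<bar> \<le> e*(Pb+Pa)*(Qd+Qc)"
  shows "Y*(Pb-Pa)*(Qd-Qc) \<le> S \<Longrightarrow> Y - l \<le> 36*e/\<delta>^2"
    and "S \<le> Y*(Pb-Pa)*(Qd-Qc) \<Longrightarrow> l - Y \<le> 36*e/\<delta>^2"
proof -
  have e0: "e \<ge> 0"
  proof -
    have h: "0 \<le> e*(Pb+Pa)*(Qd+Qc)" by (rule order_trans[OF abs_ge_zero S])
    have "0 \<le> e * ((Pb+Pa)*(Qd+Qc))" using h by (simp add: mult.assoc)
    moreover have "(1+\<delta>/2)*Pa > 0" "(1+\<delta>/2)*Qc > 0" using pos d by simp_all
    then have "Pb > 0" "Qd > 0" using r by linarith+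
    then have "(Pb+Pa)*(Qd+Qc) > 0" using pos by simp
    ultimately show ?thesis by (simp add: zero_le_mult_iff)
  qed
  have X: "(Pb-Pa)*(Qd-Qc) \<ge> (\<delta>/2*Pa)*(\<delta>/2*Qc)"
    using r pos d by (intro mult_mono) (auto simp: algebra_simps)
  have E: "e*(Pb+Pa)*(Qd+Qc) \<le> e*(3*Pa)*(3*Qc)"
  proof -
    have "Pa*\<delta> \<le> Pa" "Qc*\<delta> \<le> Qc" using pos d by (simp_all add: mult_left_le)
    moreover have "Pb \<le> Pa + Pa*\<delta>" "Qd \<le> Qc + Qc*\<delta>" using r by (simp_all add: algebra_simps)
    ultimately have A: "Pb + Pa \<le> 3*Pa" "Qd + Qc \<le> 3*Qc" by linarith+
    have E1: "e*(Pb+Pa) \<le> e*(3*Pa)" using A e0 by (intro mult_left_mono) auto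
    have E2: "0 \<le> e*(3*Pa)" using e0 pos by simp
    have E3: "0 \<le> Qd + Qc"
    proof -
      have "Qc + Qc*\<delta>/2 \<le> Qd" using r by (simp add: algebra_simps)
      moreover have "0 \<le> Qc*\<delta>/2" using pos d by simp
      ultimately show ?thesis using pos by linarith
    qed
    show ?thesis by (rule mult_mono[OF E1 A(2) E2 E3])
  qed
  have key: "\<And>Z. Z*((Pb-Pa)*(Qd-Qc)) \<le> e*(Pb+Pa)*(Qd+Qc) \<Longrightarrow> Z \<le> 36*e/\<delta>^2"
  proof -
    fix Z assume Z: "Z*((Pb-Pa)*(Qd-Qc)) \<le> e*(Pb+Pa)*(Qd+Qc)"
    show "Z \<le> 36*e/\<delta>^2"
    proof (cases "Z \<le> 0")
      case True
      moreover have "0 \<le> 36*e/\<delta>^2" using e0 by simp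
      ultimately show ?thesis by linarith
    next
      case False
      then have "Z*((\<delta>/2*Pa)*(\<delta>/2*Qc)) \<le> Z*((Pb-Pa)*(Qd-Qc))" using X by (intro mult_left_mono) auto
      then have "Z*((\<delta>/2*Pa)*(\<delta>/2*Qc)) \<le> e*(3*Pa)*(3*Qc)" using Z E by linarith
      then have "(Z*\<delta>^2/4) * (Pa*Qc) \<le> (9*e) * (Pa*Qc)" by (simp add: algebra_simps power2_eq_square)
      then have "Z*\<delta>^2/4 \<le> 9*e" using pos by (simp add: mult_le_cancel_right)
      then show ?thesis using d by (simp add: field_simps)
    qed
  qed
  show "Y*(Pb-Pa)*(Qd-Qc) \<le> S \<Longrightarrow> Y - l \<le> 36*e/\<delta>^2"
    using S by (intro key) (auto simp: algebra_simps abs_le_iff)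
  show "S \<le> Y*(Pb-Pa)*(Qd-Qc) \<Longrightarrow> l - Y \<le> 36*e/\<delta>^2"
    using S by (intro key) (auto simp: algebra_simps abs_le_iff)
qed



lemma ring_id:
  fixes Pa Pb Qc Qd xa xb xc xd l :: real
  shows "(Pb*Qd*xa - Pa*Qd*xb - Pb*Qc*xc + Pa*Qc*xd) - l*((Pb-Pa)*(Qd-Qc))
    = Pb*Qd*(xa-l) - Pa*Qd*(xb-l) - Pb*Qc*(xc-l) + Pa*Qc*(xd-l)"
  by (simp add: algebra_simps)

lemma window_bound:
  fixes p q :: "nat \<Rightarrow> real" and u :: "nat \<Rightarrow> nat \<Rightarrow> real"
  assumes pp: "\<And>k. p k > 0" and qp: "\<And>k. q k > 0" and ab: "a \<le> b" and cd: "c \<le> d"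
    and s: "\<And>x y. x \<in> {a,b} \<Longrightarrow> y \<in> {c,d} \<Longrightarrow> \<bar>wmean p q u x y - l\<bar> \<le> e"
  shows "\<bar>(\<Sum>i\<in>{a<..b}. \<Sum>j\<in>{c<..d}. p i * q j * u i j) - l*((psum p b - psum p a)*(psum q d - psum q c))\<bar>
     \<le> e*(psum p b + psum p a)*(psum q d + psum q c)"
proof -
  let ?P = "psum p" and ?Q = "psum q" and ?s = "wmean p q u"
  have eqA: "(\<Sum>i\<in>{a<..b}. \<Sum>j\<in>{c<..d}. p i * q j * u i j) - l*((?P b - ?P a)*(?Q d - ?Q c))
    = ?P b * ?Q d * (?s b d - l) - ?P a * ?Q d * (?s a d - l) - ?P b * ?Q c * (?s b c - l) + ?P a * ?Q c * (?s a c - l)"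
  proof -
    have e1: "(\<Sum>i\<in>{a<..b}. \<Sum>j\<in>{c<..d}. p i * q j * u i j)
      = ?P b * ?Q d * ?s b d - ?P a * ?Q d * ?s a d - ?P b * ?Q c * ?s b c + ?P a * ?Q c * ?s a c"
      using window_id[OF ab cd, of p q u] W_eq[OF pp qp, of _ _ u] by simp
    show ?thesis
      by (subst e1, rule ring_id[where Pa="?P a" and Pb="?P b" and Qc="?Q c" and Qd="?Q d"
          and xa="?s b d" and xb="?s a d" and xc="?s b c" and xd="?s a c" and l=l])
  qed
  have bnd: "\<bar>?P b * ?Q d * (?s b d - l) - ?P a * ?Q d * (?s a d - l) - ?P b * ?Q c * (?s b c - l) + ?P a * ?Q c * (?s a c - l)\<bar> \<le> e*(?P b + ?P a)*(?Q d + ?Q c)"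
  proof -
    have "?P a > 0" "?P b > 0" "?Q c > 0" "?Q d > 0" using psum_pos[where w=p, OF pp] psum_pos[where w=q, OF qp] by blast+
    then show ?thesis by (intro four s) auto
  qed
  show ?thesis by (subst eqA) (rule bnd)
qed

theorem theorem4p2:
  fixes p q :: "nat \<Rightarrow> real" and u :: "nat \<Rightarrow> nat \<Rightarrow> real" and l \<alpha> :: real
  assumes "\<alpha> \<ge> 0"
    and "p \<in> SVA_reg \<alpha>" and "q \<in> SVA_reg \<alpha>"
    and "filterlim (psum p) at_top sequentially"
    and "filterlim (psum q) at_top sequentially"
    and "NPQ_summable_to p q u l"
    and "O_L (\<lambda>m n. psum p m / p m * Delta10 u m n)"
    and "O_L (\<lambda>m n. psum q n / q n * Delta01 u m n)"
  shows "P_convergent_to u l"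
proof -
  note a0 = assms(1) and pS = assms(2) and qS = assms(3) and pinf = assms(4) and qinf = assms(5)
  have pp: "\<And>k. p k > 0" using pS unfolding SVA_reg_def by blast
  have qp: "\<And>k. q k > 0" using qS unfolding SVA_reg_def by blast
  have prat: "\<And>r. r > 1 \<Longrightarrow> \<exists>K. \<forall>k\<ge>K. psum p (Suc k) \<le> r * psum p k" using ratio[OF pS a0] by blast
  have qrat: "\<And>r. r > 1 \<Longrightarrow> \<exists>K. \<forall>k\<ge>K. psum q (Suc k) \<le> r * psum q k" using ratio[OF qS a0] by blast
  obtain M1 n01 where M1: "M1 > 0" and H1: "\<And>m n. m \<ge> n01 \<Longrightarrow> n \<ge> n01 \<Longrightarrow> psum p m / p m * Delta10 u m n \<ge> - M1"
    using assms(7) unfolding O_L_def by blast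
  obtain M2 n02 where M2: "M2 > 0" and H2: "\<And>m n. m \<ge> n02 \<Longrightarrow> n \<ge> n02 \<Longrightarrow> psum q n / q n * Delta01 u m n \<ge> - M2"
    using assms(8) unfolding O_L_def by blast
  define C where "C = max M1 M2"
  define n1 where "n1 = max (max n01 n02) 1"
  have C0: "C > 0" using M1 unfolding C_def by simp
  have row: "u m n - u (m-1) n \<ge> - C * p m / psum p m" if "m \<ge> n1" "n \<ge> n1" for m n
  proof -
    have Pm: "psum p m > 0" using psum_pos[where w=p, OF pp] by blast
    have m1: "m \<noteq> 0" using that unfolding n1_def by simp
    have h: "psum p m / p m * (u m n - u (m-1) n) \<ge> - M1"
      using H1[of m n] that m1 unfolding n1_def Delta10_def by simp
    have eq: "u m n - u (m-1) n = (psum p m / p m * (u m n - u (m-1) n)) * (p m / psum p m)"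
      using pp[of m] Pm by (simp add: field_simps)
    have "(- M1) * (p m / psum p m) \<le> (psum p m / p m * (u m n - u (m-1) n)) * (p m / psum p m)"
      using h pp[of m] Pm by (intro mult_right_mono) auto
    moreover have "- C * (p m / psum p m) \<le> (- M1) * (p m / psum p m)"
      using pp[of m] Pm unfolding C_def by (intro mult_right_mono) auto
    ultimately show ?thesis using eq by simp
  qed
  have col: "u m n - u m (n-1) \<ge> - C * q n / psum q n" if "m \<ge> n1" "n \<ge> n1" for m n
  proof -
    have Qn: "psum q n > 0" using psum_pos[where w=q, OF qp] by blast
    have n1': "n \<noteq> 0" using that unfolding n1_def by simp
    have h: "psum q n / q n * (u m n - u m (n-1)) \<ge> - M2"
      using H2[of m n] that n1' unfolding n1_def Delta01_def by simp
    have eq: "u m n - u m (n-1) = (psum q n / q n * (u m n - u m (n-1))) * (q n / psum q n)"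
      using qp[of n] Qn by (simp add: field_simps)
    have "(- M2) * (q n / psum q n) \<le> (psum q n / q n * (u m n - u m (n-1))) * (q n / psum q n)"
      using h qp[of n] Qn by (intro mult_right_mono) auto
    moreover have "- C * (q n / psum q n) \<le> (- M2) * (q n / psum q n)"
      using qp[of n] Qn unfolding C_def by (intro mult_right_mono) auto
    ultimately show ?thesis using eq by simp
  qed
  have rowT: "u i j \<ge> u a j - C * \<delta>"
    if "n1 \<le> a" "a \<le> i" "n1 \<le> j" "psum p i \<le> (1+\<delta>) * psum p a" for a i j \<delta>
    using tele2[where w=p and C=C and a=a and i=i and f="\<lambda>k. u k j" and \<delta>=\<delta>, OF pp less_imp_le[OF C0]] row that by auto
  have colT: "u m j \<ge> u m c - C * \<delta>"
    if "n1 \<le> c" "c \<le> j" "n1 \<le> m" "psum q j \<le> (1+\<delta>) * psum q c" for m c j \<delta>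
    using tele2[where w=q and C=C and a=c and i=j and f="\<lambda>k. u m k" and \<delta>=\<delta>, OF qp less_imp_le[OF C0]] col that by auto
  show ?thesis unfolding P_convergent_to_def
  proof (intro allI impI)
    fix \<epsilon> :: real assume ep: "\<epsilon> > 0"
    define \<delta> where "\<delta> = min 1 (\<epsilon> / (8*C))"
    have d0: "\<delta> > 0" and d1: "\<delta> \<le> 1" using ep C0 unfolding \<delta>_def by auto
    have dC: "2 * C * \<delta> \<le> \<epsilon> / 4"
    proof -
      have "\<delta> \<le> \<epsilon> / (8*C)" unfolding \<delta>_def by simp
      then have "2*C*\<delta> \<le> 2*C*(\<epsilon>/(8*C))" using C0 by (intro mult_left_mono) auto
      also have "\<dots> = \<epsilon>/4" using C0 by simp
      finally show ?thesis .
    qed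
    define e where "e = \<epsilon> * \<delta>^2 / 144"
    have e0: "e > 0" using ep d0 unfolding e_def by simp
    have e36: "36 * e / \<delta>^2 = \<epsilon> / 4" using d0 unfolding e_def by (simp add: field_simps)
    obtain N0 where N0l: "\<And>m n. m \<ge> N0 \<Longrightarrow> n \<ge> N0 \<Longrightarrow> \<bar>wmean p q u m n - l\<bar> < e"
      using assms(6) e0 unfolding NPQ_summable_to_def P_convergent_to_def by blast
    have N0: "\<bar>wmean p q u m n - l\<bar> \<le> e" if "m \<ge> N0" "n \<ge> N0" for m n
      using N0l[OF that] by simp
    obtain K1 where K1: "\<And>m. m \<ge> K1 \<Longrightarrow> \<exists>b>m. (1+\<delta>/2) * psum p m \<le> psum p b \<and> psum p b \<le> (1+\<delta>) * psum p m"
      using selA[OF pp pinf prat d0] by blast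
    obtain K2 where K2: "\<And>m. m \<ge> K2 \<Longrightarrow> \<exists>b>m. (1+\<delta>/2) * psum q m \<le> psum q b \<and> psum q b \<le> (1+\<delta>) * psum q m"
      using selA[OF qp qinf qrat d0] by blast
    obtain K3 where K3: "\<And>m. m \<ge> K3 \<Longrightarrow> \<exists>a. max N0 n1 \<le> a \<and> a < m \<and> (1+\<delta>/2) * psum p a \<le> psum p m \<and> psum p m \<le> (1+\<delta>) * psum p a"
      using selB[OF pp pinf prat d0, of "max N0 n1"] by blast
    obtain K4 where K4: "\<And>m. m \<ge> K4 \<Longrightarrow> \<exists>a. max N0 n1 \<le> a \<and> a < m \<and> (1+\<delta>/2) * psum q a \<le> psum q m \<and> psum q m \<le> (1+\<delta>) * psum q a"
      using selB[OF qp qinf qrat d0, of "max N0 n1"] by blast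
    define n0 where "n0 = max (max (max N0 n1) (max K1 K2)) (max K3 K4)"
    show "\<exists>n0. \<forall>m n. n0 \<le> m \<and> n0 \<le> n \<longrightarrow> \<bar>u m n - l\<bar> < \<epsilon>"
    proof (rule exI[of _ n0], intro allI impI)
      fix m n assume mn: "n0 \<le> m \<and> n0 \<le> n"
      have mN0: "m \<ge> N0" "n \<ge> N0" "m \<ge> n1" "n \<ge> n1" using mn unfolding n0_def by auto
      have Pm: "psum p m > 0" "psum q n > 0" using psum_pos[where w=p, OF pp] psum_pos[where w=q, OF qp] by blast+
      obtain b where bm: "b > m" and b1: "(1+\<delta>/2) * psum p m \<le> psum p b" and b2: "psum p b \<le> (1+\<delta>) * psum p m"
        using K1[of m] mn unfolding n0_def by auto
      obtain d where dn: "d > n" and d1': "(1+\<delta>/2) * psum q n \<le> psum q d" and d2: "psum q d \<le> (1+\<delta>) * psum q n"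
        using K2[of n] mn unfolding n0_def by auto
      have lowU: "u m n - 2*C*\<delta> \<le> u i j" if "m < i" "i \<le> b" "n < j" "j \<le> d" for i j
      proof -
        have "psum p i \<le> (1+\<delta>) * psum p m" using b2 psum_mono[where w=p, OF pp that(2)] by simp
        then have A: "u i j \<ge> u m j - C*\<delta>" using rowT[of m i j \<delta>] that mN0 by simp
        have "psum q j \<le> (1+\<delta>) * psum q n" using d2 psum_mono[where w=q, OF qp that(4)] by simp
        then have B: "u m j \<ge> u m n - C*\<delta>" using colT[of n j m \<delta>] that mN0 by simp
        show ?thesis using A B by simp
      qed
      have WB1: "\<bar>(\<Sum>i\<in>{m<..b}. \<Sum>j\<in>{n<..d}. p i * q j * u i j) - l*((psum p b - psum p m)*(psum q d - psum q n))\<bar>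
           \<le> e*(psum p b + psum p m)*(psum q d + psum q n)"
        using bm dn mN0 by (intro window_bound[OF pp qp]) (auto intro!: N0)
      have "(u m n - 2*C*\<delta>) * (psum p b - psum p m) * (psum q d - psum q n) \<le> (\<Sum>i\<in>{m<..b}. \<Sum>j\<in>{n<..d}. p i * q j * u i j)"
        using bm dn by (intro avg_ge[OF pp qp] lowU) auto
      then have up: "(u m n - 2*C*\<delta>) - l \<le> 36*e/\<delta>^2"
        using core(1)[OF Pm d0 d1 b1 b2 d1' d2 WB1] by blast
      obtain a where aN: "max N0 n1 \<le> a" and am: "a < m" and a1: "(1+\<delta>/2) * psum p a \<le> psum p m" and a2: "psum p m \<le> (1+\<delta>) * psum p a"
        using K3[of m] mn unfolding n0_def by auto
      obtain c where cN: "max N0 n1 \<le> c" and cn: "c < n" and c1: "(1+\<delta>/2) * psum q c \<le> psum q n" and c2: "psum q n \<le> (1+\<delta>) * psum q c"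
        using K4[of n] mn unfolding n0_def by auto
      have Pa: "psum p a > 0" "psum q c > 0" using psum_pos[where w=p, OF pp] psum_pos[where w=q, OF qp] by blast+
      have upL: "u i j \<le> u m n + 2*C*\<delta>" if "a < i" "i \<le> m" "c < j" "j \<le> n" for i j
      proof -
        have "psum p a \<le> psum p i" using psum_mono[where w=p, OF pp] that(1) by simp
        then have "(1+\<delta>) * psum p a \<le> (1+\<delta>) * psum p i" using d0 by (intro mult_left_mono) auto
        then have "psum p m \<le> (1+\<delta>) * psum p i" using a2 by linarith
        then have A: "u m j \<ge> u i j - C*\<delta>" using rowT[of i m j \<delta>] that aN cN by simp
        have "psum q c \<le> psum q j" using psum_mono[where w=q, OF qp] that(3) by simp
        then have "(1+\<delta>) * psum q c \<le> (1+\<delta>) * psum q j" using d0 by (intro mult_left_mono) auto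
        then have "psum q n \<le> (1+\<delta>) * psum q j" using c2 by linarith
        then have B: "u m n \<ge> u m j - C*\<delta>" using colT[of j n m \<delta>] that cN mN0 by simp
        show ?thesis using A B by simp
      qed
      have WB2: "\<bar>(\<Sum>i\<in>{a<..m}. \<Sum>j\<in>{c<..n}. p i * q j * u i j) - l*((psum p m - psum p a)*(psum q n - psum q c))\<bar>
           \<le> e*(psum p m + psum p a)*(psum q n + psum q c)"
        using am cn mN0 aN cN by (intro window_bound[OF pp qp]) (auto intro!: N0)
      have "(\<Sum>i\<in>{a<..m}. \<Sum>j\<in>{c<..n}. p i * q j * u i j) \<le> (u m n + 2*C*\<delta>) * (psum p m - psum p a) * (psum q n - psum q c)"
        using am cn by (intro avg_le[OF pp qp] upL) auto
      then have lo: "l - (u m n + 2*C*\<delta>) \<le> 36*e/\<delta>^2"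
        using core(2)[OF Pa d0 d1 a1 a2 c1 c2 WB2] by blast
      show "\<bar>u m n - l\<bar> < \<epsilon>" using up lo e36 dC ep by (simp add: abs_less_iff)
    qed
  qed
qed

end
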